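(* Let $G$ be a group equipped with a proper left-invariant metric $d_G$ (bounded sets are finite). Suppose $G$ is locally finite. Then the following are equivalent: (a) $\mathrm{dim}_{AN}(G,d_G)=0$; (b) there is a constant $c>0$ such that for each $r>0$ the subgroup of $G$ generated by the open ball $B(1,r)$ is contained in $B(1,c\cdot r)$.
   Context: A group is locally finite if every finitely generated subgroup is finite. For a metric space $X$, $r>0$: an $r$-path is a sequence $x_0,\dots,x_m$ with $d(x_j,x_{j+1})<r$; two points of $Y\subseteq X$ lie in the same $r$-component of $Y$ if joined by an $r$-path in $Y$. An $n$-dimensional control function of $X$ is $D:\mathbb{R}_+\to\mathbb{R}_+\cup\{\infty\}$ such that for each $r>0$ there is a cover $\{X_0,\dots,X_n\}$ of $X$ such that every open ball $B(x,r)$ lies in some $X_i$ and every $r$-component of each $X_i$ has diameter at most $D(r)$. $\mathrm{dim}_{AN}(X)$ is the smallest $n$ such that $X$ has an $n$-dimensional control function of the form $D(r)=Cr$ for some $C>0$. *)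

theory Defs
  imports "HOL-Algebra.Algebra" "HOL-Library.Extended_Real" "HOL-Library.Extended_Nat"
begin

definition metric_on :: "'a set \<Rightarrow> ('a \<Rightarrow> 'a \<Rightarrow> real) \<Rightarrow> bool" where
  "metric_on M d \<longleftrightarrow>
     (\<forall>x\<in>M. \<forall>y\<in>M. d x y \<ge> 0 \<and> (d x y = 0 \<longleftrightarrow> x = y) \<and> d x y = d y x) \<and>
     (\<forall>x\<in>M. \<forall>y\<in>M. \<forall>z\<in>M. d x z \<le> d x y + d y z)"

definition mball :: "'a set \<Rightarrow> ('a \<Rightarrow> 'a \<Rightarrow> real) \<Rightarrow> 'a \<Rightarrow> real \<Rightarrow> 'a set" where
  "mball M d x r = {y\<in>M. d x y < r}"

definition same_r_component ::
  "('a \<Rightarrow> 'a \<Rightarrow> real) \<Rightarrow> real \<Rightarrow> 'a set \<Rightarrow> 'a \<Rightarrow> 'a \<Rightarrow> bool" where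
  "same_r_component d r Y x y \<longleftrightarrow>
     (\<exists>ps. ps \<noteq> [] \<and> hd ps = x \<and> last ps = y \<and> set ps \<subseteq> Y \<and>
           (\<forall>j. Suc j < length ps \<longrightarrow> d (ps ! j) (ps ! Suc j) < r))"

text \<open>n-dimensional control function D of (M,d). The diameter bound
  "every r-component of U i has diameter at most D r" is written out:
  any two points of one r-component have distance at most D r.\<close>
definition control_function ::
  "'a set \<Rightarrow> ('a \<Rightarrow> 'a \<Rightarrow> real) \<Rightarrow> nat \<Rightarrow> (real \<Rightarrow> ereal) \<Rightarrow> bool" where
  "control_function M d n D \<longleftrightarrow>
     (\<forall>r>0. \<exists>U :: nat \<Rightarrow> 'a set.
        (\<forall>i\<le>n. U i \<subseteq> M) \<and> (\<Union>i\<le>n. U i) = M \<and>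
        (\<forall>x\<in>M. \<exists>i\<le>n. mball M d x r \<subseteq> U i) \<and>
        (\<forall>i\<le>n. \<forall>x y. same_r_component d r (U i) x y \<longrightarrow> ereal (d x y) \<le> D r))"

definition dim_AN :: "'a set \<Rightarrow> ('a \<Rightarrow> 'a \<Rightarrow> real) \<Rightarrow> enat" where
  "dim_AN M d =
     (if \<exists>n C. C > 0 \<and> control_function M d n (\<lambda>r. ereal (C * r))
      then enat (LEAST n. \<exists>C. C > 0 \<and> control_function M d n (\<lambda>r. ereal (C * r)))
      else \<infinity>)"

definition locally_finite_group :: "('a, 'b) monoid_scheme \<Rightarrow> bool" where
  "locally_finite_group G \<longleftrightarrow>
     (\<forall>S. S \<subseteq> carrier G \<longrightarrow> finite S \<longrightarrow> finite (generate G S))"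

definition left_invariant :: "('a, 'b) monoid_scheme \<Rightarrow> ('a \<Rightarrow> 'a \<Rightarrow> real) \<Rightarrow> bool" where
  "left_invariant G d \<longleftrightarrow>
     (\<forall>g\<in>carrier G. \<forall>x\<in>carrier G. \<forall>y\<in>carrier G. d (g \<otimes>\<^bsub>G\<^esub> x) (g \<otimes>\<^bsub>G\<^esub> y) = d x y)"

definition proper_metric :: "'a set \<Rightarrow> ('a \<Rightarrow> 'a \<Rightarrow> real) \<Rightarrow> bool" where
  "proper_metric M d \<longleftrightarrow>
     (\<forall>S. S \<subseteq> M \<longrightarrow> (\<exists>x\<in>M. \<exists>R. \<forall>y\<in>S. d x y \<le> R) \<longrightarrow> finite S)"

end

theory Submission
  imports Defs
begin

definition rrel :: "('a \<Rightarrow> 'a \<Rightarrow> real) \<Rightarrow> real \<Rightarrow> 'a set \<Rightarrow> ('a \<times> 'a) set" where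
  "rrel d r Y = {(a,b). a \<in> Y \<and> b \<in> Y \<and> d a b < r}"

lemma src_snoc:
  assumes "same_r_component d r Y x y" "z \<in> Y" "d y z < r"
  shows "same_r_component d r Y x z"
proof -
  obtain ps where ps: "ps \<noteq> []" "hd ps = x" "last ps = y" "set ps \<subseteq> Y"
    "\<forall>j. Suc j < length ps \<longrightarrow> d (ps ! j) (ps ! Suc j) < r"
    using assms(1) unfolding same_r_component_def by blast
  have "\<forall>j. Suc j < length (ps @ [z]) \<longrightarrow> d ((ps @ [z]) ! j) ((ps @ [z]) ! Suc j) < r"
  proof (intro allI impI)
    fix j assume j: "Suc j < length (ps @ [z])"
    show "d ((ps @ [z]) ! j) ((ps @ [z]) ! Suc j) < r"
    proof (cases "Suc j < length ps")
      case True thus ?thesis using ps(5) by (simp add: nth_append)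
    next
      case False
      hence "Suc j = length ps" using j by simp
      moreover have "ps ! j = last ps" using \<open>Suc j = length ps\<close> ps(1)
        by (metis diff_Suc_1 last_conv_nth)
      ultimately show ?thesis using ps(3) assms(3) by (simp add: nth_append)
    qed
  qed
  thus ?thesis unfolding same_r_component_def using ps assms(2)
    by (intro exI[of _ "ps @ [z]"]) auto
qed

lemma rtrancl_src:
  assumes "(x,y) \<in> (rrel d r Y)\<^sup>*" "x \<in> Y"
  shows "same_r_component d r Y x y"
  using assms(1)
proof (induction rule: rtrancl_induct)
  case base
  then show ?case unfolding same_r_component_def using assms(2)
    by (intro exI[of _ "[x]"]) auto
next
  case (step y z)
  then show ?case using src_snoc[of d r Y x y z] by (auto simp: rrel_def)
qed

lemma src_rtrancl:
  "ps \<noteq> [] \<Longrightarrow> set ps \<subseteq> Y \<Longrightarrow> (\<forall>j. Suc j < length ps \<longrightarrow> d (ps ! j) (ps ! Suc j) < r)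
   \<Longrightarrow> (hd ps, last ps) \<in> (rrel d r Y)\<^sup>*"
proof (induction ps)
  case Nil then show ?case by simp
next
  case (Cons a qs)
  show ?case
  proof (cases "qs = []")
    case True then show ?thesis by simp
  next
    case False
    have h1: "(hd qs, last qs) \<in> (rrel d r Y)\<^sup>*"
      using Cons False by (metis Suc_less_eq length_Cons nth_Cons_Suc set_subset_Cons subset_trans)
    have "d a (hd qs) < r" using Cons.prems(3)[rule_format, of 0] False
      by (simp add: hd_conv_nth)
    moreover have "a \<in> Y" "hd qs \<in> Y" using Cons.prems(2) False by auto
    ultimately have "(a, hd qs) \<in> rrel d r Y" by (simp add: rrel_def)
    then show ?thesis using h1 False by simp
  qed
qed

lemma src_iff:
  "same_r_component d r Y x y \<longleftrightarrow> x \<in> Y \<and> (x,y) \<in> (rrel d r Y)\<^sup>*"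
proof
  assume "same_r_component d r Y x y"
  then obtain ps where ps: "ps \<noteq> []" "hd ps = x" "last ps = y" "set ps \<subseteq> Y"
    "\<forall>j. Suc j < length ps \<longrightarrow> d (ps ! j) (ps ! Suc j) < r"
    unfolding same_r_component_def by blast
  have "(hd ps, last ps) \<in> (rrel d r Y)\<^sup>*"
    using src_rtrancl[of ps Y d r] ps(1,4,5) by blast
  then have "(x, y) \<in> (rrel d r Y)\<^sup>*" unfolding ps(2,3) .
  moreover have "x \<in> Y" using ps(1,2,4) hd_in_set by blast
  ultimately show "x \<in> Y \<and> (x,y) \<in> (rrel d r Y)\<^sup>*"
    by (rule conjI[rotated])
next
  assume H: "x \<in> Y \<and> (x,y) \<in> (rrel d r Y)\<^sup>*"
  show "same_r_component d r Y x y" using rtrancl_src[OF conjunct2[OF H] conjunct1[OF H]] .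
qed

lemma dim0_iff:
  "dim_AN M d = 0 \<longleftrightarrow> (\<exists>C>0. \<forall>r>0. \<forall>x y. same_r_component d r M x y \<longrightarrow> d x y \<le> C * r)"
proof -
  have cf: "control_function M d 0 (\<lambda>r. ereal (C * r)) \<longleftrightarrow>
      (\<forall>r>0. \<forall>x y. same_r_component d r M x y \<longrightarrow> d x y \<le> C * r)" for C
  proof
    assume "control_function M d 0 (\<lambda>r. ereal (C * r))"
    then show "\<forall>r>0. \<forall>x y. same_r_component d r M x y \<longrightarrow> d x y \<le> C * r"
      unfolding control_function_def by fastforce
  next
    assume H: "\<forall>r>0. \<forall>x y. same_r_component d r M x y \<longrightarrow> d x y \<le> C * r"
    show "control_function M d 0 (\<lambda>r. ereal (C * r))"
      unfolding control_function_def
    proof (intro allI impI)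
      fix r :: real assume "r > 0"
      show "\<exists>U :: nat \<Rightarrow> _. (\<forall>i\<le>0. U i \<subseteq> M) \<and> (\<Union>i\<le>0. U i) = M \<and>
        (\<forall>x\<in>M. \<exists>i\<le>0. mball M d x r \<subseteq> U i) \<and>
        (\<forall>i\<le>0. \<forall>x y. same_r_component d r (U i) x y \<longrightarrow> ereal (d x y) \<le> ereal (C * r))"
        using H \<open>r > 0\<close> by (intro exI[of _ "\<lambda>_. M"]) (auto simp: mball_def)
    qed
  qed
  show ?thesis
  proof
    assume "dim_AN M d = 0"
    then have ex: "\<exists>n C. C > 0 \<and> control_function M d n (\<lambda>r. ereal (C * r))"
      and L: "(LEAST n. \<exists>C. C > 0 \<and> control_function M d n (\<lambda>r. ereal (C * r))) = 0"
      unfolding dim_AN_def by (auto split: if_splits simp: zero_enat_def)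
    from ex have "\<exists>C. C > 0 \<and> control_function M d (LEAST n. \<exists>C. C > 0 \<and> control_function M d n (\<lambda>r. ereal (C * r))) (\<lambda>r. ereal (C * r))"
      by (rule LeastI_ex)
    then show "\<exists>C>0. \<forall>r>0. \<forall>x y. same_r_component d r M x y \<longrightarrow> d x y \<le> C * r"
      using L cf by auto
  next
    assume "\<exists>C>0. \<forall>r>0. \<forall>x y. same_r_component d r M x y \<longrightarrow> d x y \<le> C * r"
    then obtain C where "C > 0" "control_function M d 0 (\<lambda>r. ereal (C * r))" using cf by blast
    then have "(LEAST n. \<exists>C. C > 0 \<and> control_function M d n (\<lambda>r. ereal (C * r))) = 0"
      by (intro Least_eq_0) blast
    then show "dim_AN M d = 0" unfolding dim_AN_def using \<open>C > 0\<close> \<open>control_function M d 0 _\<close>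
      by (auto simp: zero_enat_def)
  qed
qed


theorem proposition2p1:
  fixes G :: "('a, 'b) monoid_scheme" and d :: "'a \<Rightarrow> 'a \<Rightarrow> real"
  assumes "group G"
    and "metric_on (carrier G) d"
    and "left_invariant G d"
    and "proper_metric (carrier G) d"
    and "locally_finite_group G"
  shows "dim_AN (carrier G) d = 0 \<longleftrightarrow>
         (\<exists>c>0. \<forall>r>0. generate G (mball (carrier G) d \<one>\<^bsub>G\<^esub> r)
                        \<subseteq> mball (carrier G) d \<one>\<^bsub>G\<^esub> (c * r))"
proof -
  interpret group G by fact
  note met = assms(2)[unfolded metric_on_def]
  have LI: "d (g \<otimes>\<^bsub>G\<^esub> x) (g \<otimes>\<^bsub>G\<^esub> y) = d x y" if "g \<in> carrier G" "x \<in> carrier G" "y \<in> carrier G" for g x y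
    using assms(3) that unfolding left_invariant_def by blast
  have L1: "d x y = d \<one>\<^bsub>G\<^esub> (inv\<^bsub>G\<^esub> x \<otimes>\<^bsub>G\<^esub> y)" if "x \<in> carrier G" "y \<in> carrier G" for x y
    using LI[of "inv\<^bsub>G\<^esub> x" x y] that by simp
  have trans_inv: "(g \<otimes>\<^bsub>G\<^esub> a, g \<otimes>\<^bsub>G\<^esub> b) \<in> (rrel d r (carrier G))\<^sup>*"
    if "(a,b) \<in> (rrel d r (carrier G))\<^sup>*" "g \<in> carrier G" for a b g r
    using that(1)
  proof (induction rule: rtrancl_induct)
    case base then show ?case by simp
  next
    case (step y z)
    then have "(g \<otimes>\<^bsub>G\<^esub> y, g \<otimes>\<^bsub>G\<^esub> z) \<in> rrel d r (carrier G)"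
      using LI[of g y z] that(2) by (auto simp: rrel_def)
    with step.IH show ?case by (rule rtrancl_into_rtrancl)
  qed
  show ?thesis unfolding dim0_iff
  proof
    assume "\<exists>C>0. \<forall>r>0. \<forall>x y. same_r_component d r (carrier G) x y \<longrightarrow> d x y \<le> C * r"
    then obtain C where C: "C > 0"
      "\<And>r x y. r > 0 \<Longrightarrow> same_r_component d r (carrier G) x y \<Longrightarrow> d x y \<le> C * r" by blast
    show "\<exists>c>0. \<forall>r>0. generate G (mball (carrier G) d \<one>\<^bsub>G\<^esub> r) \<subseteq> mball (carrier G) d \<one>\<^bsub>G\<^esub> (c * r)"
    proof (intro exI[of _ "2 * C"] conjI allI impI subsetI)
      show "2 * C > 0" using C by simp
      fix r :: real and h assume r: "r > 0" and h: "h \<in> generate G (mball (carrier G) d \<one>\<^bsub>G\<^esub> r)"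
      have "h \<in> carrier G \<and> (\<one>\<^bsub>G\<^esub>, h) \<in> (rrel d r (carrier G))\<^sup>*"
        using h
      proof (induction rule: generate.induct)
        case one then show ?case by simp
      next
        case (incl h)
        then show ?case by (auto simp: mball_def rrel_def)
      next
        case (inv h)
        then have hc: "h \<in> carrier G" and "d \<one>\<^bsub>G\<^esub> h < r" by (auto simp: mball_def)
        moreover have "d \<one>\<^bsub>G\<^esub> (inv\<^bsub>G\<^esub> h) = d h \<one>\<^bsub>G\<^esub>" using L1[of h "\<one>\<^bsub>G\<^esub>"] hc by simp
        moreover have "d h \<one>\<^bsub>G\<^esub> = d \<one>\<^bsub>G\<^esub> h" using met hc by auto
        ultimately have "(\<one>\<^bsub>G\<^esub>, inv\<^bsub>G\<^esub> h) \<in> rrel d r (carrier G)" by (auto simp: rrel_def)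
        then show ?case using hc by auto
      next
        case (eng h1 h2)
        then have "(h1 \<otimes>\<^bsub>G\<^esub> \<one>\<^bsub>G\<^esub>, h1 \<otimes>\<^bsub>G\<^esub> h2) \<in> (rrel d r (carrier G))\<^sup>*"
          using trans_inv by blast
        then show ?case using eng by (auto intro: rtrancl_trans)
      qed
      then have "same_r_component d r (carrier G) \<one>\<^bsub>G\<^esub> h" and hc: "h \<in> carrier G"
        by (auto simp: src_iff)
      then have "d \<one>\<^bsub>G\<^esub> h \<le> C * r" using C r by blast
      also have "\<dots> < 2 * C * r" using C r by simp
      finally show "h \<in> mball (carrier G) d \<one>\<^bsub>G\<^esub> (2 * C * r)" using hc by (simp add: mball_def)
    qed
  next
    assume "\<exists>c>0. \<forall>r>0. generate G (mball (carrier G) d \<one>\<^bsub>G\<^esub> r) \<subseteq> mball (carrier G) d \<one>\<^bsub>G\<^esub> (c * r)"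
    then obtain c where c: "c > 0"
      "\<And>r. r > 0 \<Longrightarrow> generate G (mball (carrier G) d \<one>\<^bsub>G\<^esub> r) \<subseteq> mball (carrier G) d \<one>\<^bsub>G\<^esub> (c * r)" by blast
    show "\<exists>C>0. \<forall>r>0. \<forall>x y. same_r_component d r (carrier G) x y \<longrightarrow> d x y \<le> C * r"
    proof (intro exI[of _ c] conjI allI impI)
      show "c > 0" by fact
      fix r :: real and x y assume r: "r > 0" and s: "same_r_component d r (carrier G) x y"
      then have xc: "x \<in> carrier G" and xy: "(x,y) \<in> (rrel d r (carrier G))\<^sup>*" using s by (auto simp: src_iff)
      have "y \<in> carrier G \<and> inv\<^bsub>G\<^esub> x \<otimes>\<^bsub>G\<^esub> y \<in> generate G (mball (carrier G) d \<one>\<^bsub>G\<^esub> r)"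
        using xy
      proof (induction rule: rtrancl_induct)
        case base then show ?case using xc by (simp add: generate.one)
      next
        case (step y z)
        then have yc: "y \<in> carrier G" and zc: "z \<in> carrier G" and dyz: "d y z < r"
          by (auto simp: rrel_def)
        have "inv\<^bsub>G\<^esub> y \<otimes>\<^bsub>G\<^esub> z \<in> mball (carrier G) d \<one>\<^bsub>G\<^esub> r"
          using L1[OF yc zc] dyz yc zc by (simp add: mball_def)
        then have g2: "inv\<^bsub>G\<^esub> y \<otimes>\<^bsub>G\<^esub> z \<in> generate G (mball (carrier G) d \<one>\<^bsub>G\<^esub> r)" by (rule generate.incl)
        have "inv\<^bsub>G\<^esub> x \<otimes>\<^bsub>G\<^esub> z = (inv\<^bsub>G\<^esub> x \<otimes>\<^bsub>G\<^esub> y) \<otimes>\<^bsub>G\<^esub> (inv\<^bsub>G\<^esub> y \<otimes>\<^bsub>G\<^esub> z)"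
          using xc yc zc by (simp add: m_assoc[symmetric] r_inv) (simp add: m_assoc r_inv)
        then show ?case using generate.eng[OF conjunct2[OF step.IH] g2] zc by simp
      qed
      then have yc: "y \<in> carrier G" and "inv\<^bsub>G\<^esub> x \<otimes>\<^bsub>G\<^esub> y \<in> mball (carrier G) d \<one>\<^bsub>G\<^esub> (c * r)" using c r by auto
      then have "d \<one>\<^bsub>G\<^esub> (inv\<^bsub>G\<^esub> x \<otimes>\<^bsub>G\<^esub> y) < c * r" by (simp add: mball_def)
      then show "d x y \<le> c * r" using L1[OF xc yc] by simp
    qed
  qed
qed

end
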